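(* Let $k$ be a field of prime characteristic $p$, and let $V_1,V_2,\ldots$ be a sequence of $T$-spaces of $k_0\langle X\rangle$ such that (a) $(V_iV_j)^S=V_{i+j}$ for all $i,j\ge1$, and (b) $V_{2m+1}\subseteq V_{m+1}+V_1$ for all $m\ge1$. Then for any integers $r,s$ with $0<r<s$, we have $V_{s+t(s-r)}\subseteq V_r+V_s$ for all integers $t\ge0$.
   Context: $X=\{x_1,x_2,\ldots\}$ is a countably infinite set and $k_0\langle X\rangle$ denotes the free associative (non-unital) $k$-algebra on $X$. A $T$-space is a $k$-subspace of $k_0\langle X\rangle$ invariant under every algebra endomorphism of $k_0\langle X\rangle$ (i.e. closed under substitution of arbitrary elements of $k_0\langle X\rangle$ for the variables). For a subset $A$, $A^S$ (or $(A)^S$) denotes the $T$-space generated by $A$. For subsets $A,B$, $AB$ denotes the set of products $\{ab: a\in A, b\in B\}$. Sums of $T$-spaces are sums of subspaces. *)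

theory Defs
  imports Main "HOL-Library.Poly_Mapping" "HOL-Computational_Algebra.Primes"
begin

text \<open>Elements of the free associative algebra over k on X = {x_0, x_1, ...}:
  finitely supported k-valued functions on words (lists of variable indices).
  The non-unital algebra k_0<X> consists of those with no constant term.\<close>

type_synonym 'k fa = "nat list \<Rightarrow>\<^sub>0 'k"

definition FA :: "'k::field fa set" where
  "FA = {p. [] \<notin> Poly_Mapping.keys p}"

definition fa_mult :: "'k::field fa \<Rightarrow> 'k fa \<Rightarrow> 'k fa" where
  "fa_mult p q = (\<Sum>u\<in>Poly_Mapping.keys p. \<Sum>v\<in>Poly_Mapping.keys q. Poly_Mapping.single (u @ v) (Poly_Mapping.lookup p u * Poly_Mapping.lookup q v))"

definition fa_smult :: "'k::field \<Rightarrow> 'k fa \<Rightarrow> 'k fa" where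
  "fa_smult c p = Poly_Mapping.map (\<lambda>x. c * x) p"

fun word_eval :: "(nat \<Rightarrow> 'k::field fa) \<Rightarrow> nat list \<Rightarrow> 'k fa" where
  "word_eval \<sigma> [] = Poly_Mapping.single [] 1"
| "word_eval \<sigma> (i # w) = fa_mult (\<sigma> i) (word_eval \<sigma> w)"

definition fa_subst :: "(nat \<Rightarrow> 'k::field fa) \<Rightarrow> 'k fa \<Rightarrow> 'k fa" where
  "fa_subst \<sigma> p = (\<Sum>w\<in>Poly_Mapping.keys p. fa_smult (Poly_Mapping.lookup p w) (word_eval \<sigma> w))"

definition subspace_FA :: "'k::field fa set \<Rightarrow> bool" where
  "subspace_FA V \<longleftrightarrow> V \<subseteq> FA \<and> 0 \<in> V \<and> (\<forall>a\<in>V. \<forall>b\<in>V. a + b \<in> V)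
     \<and> (\<forall>c. \<forall>a\<in>V. fa_smult c a \<in> V)"

definition Tspace :: "'k::field fa set \<Rightarrow> bool" where
  "Tspace V \<longleftrightarrow> subspace_FA V \<and>
     (\<forall>\<sigma>. (\<forall>i. \<sigma> i \<in> FA) \<longrightarrow> (\<forall>p\<in>V. fa_subst \<sigma> p \<in> V))"

definition Tgen :: "'k::field fa set \<Rightarrow> 'k fa set" where
  "Tgen A = \<Inter>{V. Tspace V \<and> A \<subseteq> V}"

definition set_prod :: "'k::field fa set \<Rightarrow> 'k fa set \<Rightarrow> 'k fa set" where
  "set_prod A B = {fa_mult a b | a b. a \<in> A \<and> b \<in> B}"

definition space_sum :: "'k::field fa set \<Rightarrow> 'k fa set \<Rightarrow> 'k fa set" where
  "space_sum A B = {a + b | a b. a \<in> A \<and> b \<in> B}"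

end

theory Submission
  imports Defs
begin

lemma lookup_smult: "Poly_Mapping.lookup (fa_smult c p) k = c * Poly_Mapping.lookup p k"
  unfolding fa_smult_def by transfer (simp add: when_def)

lemma smult_add: "fa_smult c (a + b) = fa_smult c a + fa_smult c b"
  by (rule poly_mapping_eqI) (simp add: lookup_smult lookup_add algebra_simps)

lemma smult_add2: "fa_smult (c + d) a = fa_smult c a + fa_smult d a"
  by (rule poly_mapping_eqI) (simp add: lookup_smult lookup_add algebra_simps)

lemma smult_0: "fa_smult 0 a = 0"
  by (rule poly_mapping_eqI) (simp add: lookup_smult)

lemma fa_mult_gen:
  assumes "finite S" "finite T" "Poly_Mapping.keys p \<subseteq> S" "Poly_Mapping.keys q \<subseteq> T"
  shows "fa_mult p q = (\<Sum>u\<in>S. \<Sum>v\<in>T. Poly_Mapping.single (u @ v) (Poly_Mapping.lookup p u * Poly_Mapping.lookup q v))"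
proof -
  have "fa_mult p q = (\<Sum>u\<in>S. \<Sum>v\<in>Poly_Mapping.keys q. Poly_Mapping.single (u @ v) (Poly_Mapping.lookup p u * Poly_Mapping.lookup q v))"
    unfolding fa_mult_def
    by (rule sum.mono_neutral_left) (use assms in \<open>auto simp: in_keys_iff\<close>)
  also have "\<dots> = (\<Sum>u\<in>S. \<Sum>v\<in>T. Poly_Mapping.single (u @ v) (Poly_Mapping.lookup p u * Poly_Mapping.lookup q v))"
    by (rule sum.cong[OF refl], rule sum.mono_neutral_left) (use assms in \<open>auto simp: in_keys_iff\<close>)
  finally show ?thesis .
qed

lemma fa_mult_add_left: "fa_mult (a + b) y = fa_mult a y + fa_mult b y"
proof -
  let ?S = "Poly_Mapping.keys a \<union> Poly_Mapping.keys b" and ?T = "Poly_Mapping.keys y"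
  have fin: "finite ?S" "finite ?T" by auto
  have k: "Poly_Mapping.keys (a+b) \<subseteq> ?S" by (rule keys_add)
  show ?thesis
    by (simp add: fa_mult_gen[OF fin k] fa_mult_gen[OF fin, of a y] fa_mult_gen[OF fin, of b y]
        lookup_add distrib_right single_add sum.distrib)
qed

lemma fa_subst_gen:
  assumes "finite S" "Poly_Mapping.keys p \<subseteq> S"
  shows "fa_subst \<sigma> p = (\<Sum>w\<in>S. fa_smult (Poly_Mapping.lookup p w) (word_eval \<sigma> w))"
  unfolding fa_subst_def
  by (rule sum.mono_neutral_left) (use assms in \<open>auto simp: in_keys_iff smult_0\<close>)

lemma fa_subst_add: "fa_subst \<sigma> (a + b) = fa_subst \<sigma> a + fa_subst \<sigma> b"
proof -
  let ?S = "Poly_Mapping.keys a \<union> Poly_Mapping.keys b"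
  have fin: "finite ?S" by auto
  have k: "Poly_Mapping.keys (a+b) \<subseteq> ?S" by (rule keys_add)
  show ?thesis
    by (simp add: fa_subst_gen[OF fin k] fa_subst_gen[OF fin, of a] fa_subst_gen[OF fin, of b]
        lookup_add smult_add2 sum.distrib)
qed

lemma Tspace_sum:
  assumes A: "Tspace A" and B: "Tspace B"
  shows "Tspace (space_sum A B)"
proof -
  have FAadd: "x \<in> FA \<Longrightarrow> y \<in> FA \<Longrightarrow> x + y \<in> FA" for x y
    using keys_add[of x y] unfolding FA_def by auto
  have sA: "subspace_FA A" and sB: "subspace_FA B" using A B unfolding Tspace_def by auto
  have mem: "a \<in> A \<Longrightarrow> b \<in> B \<Longrightarrow> a + b \<in> space_sum A B" for a b
    unfolding space_sum_def by blast
  have "space_sum A B \<subseteq> FA"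
  proof
    fix z assume "z \<in> space_sum A B"
    then obtain a b where "z = a + b" "a \<in> A" "b \<in> B" unfolding space_sum_def by blast
    then show "z \<in> FA" using sA sB FAadd unfolding subspace_FA_def by blast
  qed
  moreover have "0 \<in> space_sum A B"
    using mem[of 0 0] sA sB unfolding subspace_FA_def by simp
  moreover have "\<forall>x\<in>space_sum A B. \<forall>y\<in>space_sum A B. x + y \<in> space_sum A B"
  proof (intro ballI)
    fix x y assume "x \<in> space_sum A B" "y \<in> space_sum A B"
    then obtain a b a' b' where "x = a + b" "a \<in> A" "b \<in> B" "y = a' + b'" "a' \<in> A" "b' \<in> B"
      unfolding space_sum_def by blast
    moreover have "x + y = (a + a') + (b + b')" using calculation by (simp add: algebra_simps)
    ultimately show "x + y \<in> space_sum A B"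
      using mem sA sB unfolding subspace_FA_def by metis
  qed
  moreover have "\<forall>c. \<forall>x\<in>space_sum A B. fa_smult c x \<in> space_sum A B"
  proof (intro allI ballI)
    fix c x assume "x \<in> space_sum A B"
    then obtain a b where "x = a + b" "a \<in> A" "b \<in> B" unfolding space_sum_def by blast
    then show "fa_smult c x \<in> space_sum A B"
      using mem sA sB unfolding subspace_FA_def by (metis smult_add)
  qed
  moreover have "\<forall>\<sigma>. (\<forall>i. \<sigma> i \<in> FA) \<longrightarrow> (\<forall>x\<in>space_sum A B. fa_subst \<sigma> x \<in> space_sum A B)"
  proof (intro allI impI ballI)
    fix \<sigma> :: "nat \<Rightarrow> 'a fa" and x assume s: "\<forall>i. \<sigma> i \<in> FA" and "x \<in> space_sum A B"
    then obtain a b where "x = a + b" "a \<in> A" "b \<in> B" unfolding space_sum_def by blast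
    then show "fa_subst \<sigma> x \<in> space_sum A B"
      using mem A B s unfolding Tspace_def by (metis fa_subst_add)
  qed
  ultimately show ?thesis unfolding Tspace_def subspace_FA_def by blast
qed

lemma Tgen_sub: "Tspace W \<Longrightarrow> A \<subseteq> W \<Longrightarrow> Tgen A \<subseteq> W"
  unfolding Tgen_def by blast

lemma Tgen_sup: "A \<subseteq> Tgen A"
  unfolding Tgen_def by blast


lemma Tspace_sub: "Tspace W \<Longrightarrow> x \<in> W \<Longrightarrow> y \<in> W \<Longrightarrow> x + y \<in> W"
  unfolding Tspace_def subspace_FA_def by blast

lemma Tspace_0: "Tspace W \<Longrightarrow> 0 \<in> W"
  unfolding Tspace_def subspace_FA_def by blast

theorem lemma2p1:
  fixes V :: "nat \<Rightarrow> 'k::field fa set"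
  assumes char: "prime CHAR('k)"
    and T: "\<And>i. i \<ge> 1 \<Longrightarrow> Tspace (V i)"
    and a: "\<And>i j. i \<ge> 1 \<Longrightarrow> j \<ge> 1 \<Longrightarrow> Tgen (set_prod (V i) (V j)) = V (i + j)"
    and b: "\<And>m. m \<ge> 1 \<Longrightarrow> V (2 * m + 1) \<subseteq> space_sum (V (m + 1)) (V 1)"
    and rs: "0 < r" "r < s"
  shows "V (s + t * (s - r)) \<subseteq> space_sum (V r) (V s)"
proof -
  have shift: "V (n + k) \<subseteq> space_sum (V (a' + k)) (V (b' + k))"
    if h: "n \<ge> 1" "a' \<ge> 1" "b' \<ge> 1" "k \<ge> 1" "V n \<subseteq> space_sum (V a') (V b')" for n a' b' k
  proof -
    have TW: "Tspace (space_sum (V (a' + k)) (V (b' + k)))"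
      using T h by (intro Tspace_sum) auto
    have "set_prod (V n) (V k) \<subseteq> space_sum (V (a' + k)) (V (b' + k))"
    proof
      fix z assume "z \<in> set_prod (V n) (V k)"
      then obtain x y where z: "z = fa_mult x y" "x \<in> V n" "y \<in> V k"
        unfolding set_prod_def by blast
      then obtain u v where uv: "x = u + v" "u \<in> V a'" "v \<in> V b'"
        using h(5) unfolding space_sum_def by blast
      have "fa_mult u y \<in> V (a' + k)"
        using Tgen_sup[of "set_prod (V a') (V k)"] a[of a' k] h uv z
        unfolding set_prod_def by blast
      moreover have "fa_mult v y \<in> V (b' + k)"
        using Tgen_sup[of "set_prod (V b') (V k)"] a[of b' k] h uv z
        unfolding set_prod_def by blast
      ultimately show "z \<in> space_sum (V (a' + k)) (V (b' + k))"
        using z uv fa_mult_add_left unfolding space_sum_def by blast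
    qed
    then have "Tgen (set_prod (V n) (V k)) \<subseteq> space_sum (V (a' + k)) (V (b' + k))"
      using TW by (rule Tgen_sub[rotated])
    then show ?thesis using a[of n k] h by simp
  qed
  have step: "V (c + 2 * m) \<subseteq> space_sum (V (c + m)) (V c)" if "c \<ge> 1" "m \<ge> 1" for c m
  proof (cases "c = 1")
    case True
    then show ?thesis using b[OF that(2)] by (simp add: add.commute)
  next
    case False
    have "V (2 * m + 1 + (c - 1)) \<subseteq> space_sum (V (m + 1 + (c - 1))) (V (1 + (c - 1)))"
      using shift[OF _ _ _ _ b[OF that(2)], of "c - 1"] that False by simp
    moreover have "2 * m + 1 + (c - 1) = c + 2 * m" "m + 1 + (c - 1) = c + m" "1 + (c - 1) = c"
      using that by auto
    ultimately show ?thesis by (simp add: add.commute)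
  qed
  define d where "d = s - r"
  define W where "W = space_sum (V r) (V s)"
  have TW: "Tspace W" unfolding W_def using T rs by (intro Tspace_sum) auto
  have d1: "d \<ge> 1" and sd: "s = r + d" using rs unfolding d_def by auto
  have r1: "r \<ge> 1" using rs by auto
  have VrW: "V r \<subseteq> W" unfolding W_def space_sum_def
    using Tspace_0[OF T, of s] rs by force
  have VsW: "V s \<subseteq> W" unfolding W_def space_sum_def
    using Tspace_0[OF T, of r] rs by force
  have WW: "space_sum W W \<subseteq> W"
    unfolding space_sum_def using Tspace_sub[OF TW] by blast
  have P: "V (r + j * d) \<subseteq> W \<and> V (r + Suc j * d) \<subseteq> W" for j
  proof (induction j)
    case 0
    then show ?case using VrW VsW sd by simp
  next
    case (Suc j)
    have "r + Suc (Suc j) * d = (r + j * d) + 2 * d" by simp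
    then have "V (r + Suc (Suc j) * d) = V ((r + j * d) + 2 * d)" by (rule arg_cong)
    also have "\<dots> \<subseteq> space_sum (V (r + j * d + d)) (V (r + j * d))"
      using step r1 d1 by simp
    also have "\<dots> \<subseteq> space_sum W W"
      using Suc.IH by (auto simp: space_sum_def algebra_simps)
    also have "\<dots> \<subseteq> W" by (rule WW)
    finally show ?case using Suc.IH by simp
  qed
  have "s + t * (s - r) = r + Suc t * d" using sd d_def by simp
  then show ?thesis using P[of t] W_def by simp
qed

end
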